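(* In the El Gamal–Costa deterministic interference channel with feedback, under any feedback encoding functions and for every $i\ge1$, letting $U_i=(V_1^{i-1},V_2^{i-1})$, the messages $W_1$ and $W_2$ are conditionally independent given $U_i$, and consequently $X_{1i}$ and $X_{2i}$ are conditionally independent given $U_i$.
   Context: El Gamal–Costa deterministic interference channel: finite alphabets $\mathcal{X}_k,\mathcal{V}_k,\mathcal{Y}_k$ ($k=1,2$); deterministic functions $g_k:\mathcal{X}_k\to\mathcal{V}_k$ and $f_1:\mathcal{X}_1\times\mathcal{V}_2\to\mathcal{Y}_1$, $f_2:\mathcal{X}_2\times\mathcal{V}_1\to\mathcal{Y}_2$, with at each time $V_{ki}=g_k(X_{ki})$, $Y_{1i}=f_1(X_{1i},V_{2i})$, $Y_{2i}=f_2(X_{2i},V_{1i})$. The El Gamal–Costa condition holds: $V_2$ is a deterministic function of $(Y_1,X_1)$ and $V_1$ of $(Y_2,X_2)$. Independent messages $W_1,W_2$ (uniform on finite sets); with feedback, $X_{ki}=f_k^i(W_k,Y_k^{i-1})$ for deterministic functions $f_k^i$. $A^{j}=(A_1,\dots,A_j)$; $U_1$ is constant. *)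

theory Defs
  imports "HOL-Probability.Probability"
begin

record ('x1, 'x2, 'v1, 'v2, 'y1, 'y2) sym =
  sX1 :: 'x1
  sX2 :: 'x2
  sV1 :: 'v1
  sV2 :: 'v2
  sY1 :: 'y1
  sY2 :: 'y2

text \<open>Trajectory of the first n channel uses for messages w1, w2.
  enc_k i w y is the encoder f_k^i applied to the message and the past outputs
  Y_k^{i-1} (a list of length i-1).\<close>
fun traj ::
  "('x1 \<Rightarrow> 'v1) \<Rightarrow> ('x2 \<Rightarrow> 'v2) \<Rightarrow> ('x1 \<Rightarrow> 'v2 \<Rightarrow> 'y1) \<Rightarrow> ('x2 \<Rightarrow> 'v1 \<Rightarrow> 'y2)
   \<Rightarrow> (nat \<Rightarrow> 'w1 \<Rightarrow> 'y1 list \<Rightarrow> 'x1) \<Rightarrow> (nat \<Rightarrow> 'w2 \<Rightarrow> 'y2 list \<Rightarrow> 'x2)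
   \<Rightarrow> 'w1 \<Rightarrow> 'w2 \<Rightarrow> nat \<Rightarrow> ('x1, 'x2, 'v1, 'v2, 'y1, 'y2) sym list" where
  "traj g1 g2 f1 f2 enc1 enc2 w1 w2 0 = []"
| "traj g1 g2 f1 f2 enc1 enc2 w1 w2 (Suc n) =
    (let past = traj g1 g2 f1 f2 enc1 enc2 w1 w2 n;
         x1 = enc1 (Suc n) w1 (map sY1 past);
         x2 = enc2 (Suc n) w2 (map sY2 past);
         v1 = g1 x1; v2 = g2 x2
     in past @ [\<lparr>sX1 = x1, sX2 = x2, sV1 = v1, sV2 = v2, sY1 = f1 x1 v2, sY2 = f2 x2 v1\<rparr>])"

definition cond_indep :: "'o pmf \<Rightarrow> ('o \<Rightarrow> 'a) \<Rightarrow> ('o \<Rightarrow> 'b) \<Rightarrow> ('o \<Rightarrow> 'c) \<Rightarrow> bool" where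
  "cond_indep p A B C \<longleftrightarrow>
     (\<forall>a b c. measure_pmf.prob p {\<omega>. A \<omega> = a \<and> B \<omega> = b \<and> C \<omega> = c}
                * measure_pmf.prob p {\<omega>. C \<omega> = c}
              = measure_pmf.prob p {\<omega>. A \<omega> = a \<and> C \<omega> = c}
                * measure_pmf.prob p {\<omega>. B \<omega> = b \<and> C \<omega> = c})"

end

theory Submission imports Defs begin

fun sim1 :: "('x1 \<Rightarrow> 'v2 \<Rightarrow> 'y1) \<Rightarrow> (nat \<Rightarrow> 'w1 \<Rightarrow> 'y1 list \<Rightarrow> 'x1) \<Rightarrow> 'w1 \<Rightarrow> 'v2 list \<Rightarrow> nat \<Rightarrow> 'x1 list" where
  "sim1 f1 enc1 w1 b 0 = []"
| "sim1 f1 enc1 w1 b (Suc n) = (let xs = sim1 f1 enc1 w1 b n in xs @ [enc1 (Suc n) w1 (map (case_prod f1) (zip xs b))])"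

lemma sim1_len: "length (sim1 f1 enc1 w1 b n) = n"
  by (induction n) (auto simp: Let_def)

lemma sim1_take: "k \<le> n \<Longrightarrow> take k (sim1 f1 enc1 w1 b n) = sim1 f1 enc1 w1 b k"
proof (induction n)
  case 0 then show ?case by simp
next
  case (Suc n)
  show ?case
  proof (cases "k = Suc n")
    case True then show ?thesis using sim1_len by (metis order_refl take_all)
  next
    case False
    then have "k \<le> n" using Suc by simp
    then show ?thesis using Suc sim1_len[of f1 enc1 w1 b n] by (simp add: Let_def)
  qed
qed

lemma traj_len: "length (traj g1 g2 f1 f2 enc1 enc2 w1 w2 n) = n"
  by (induction n) (auto simp: Let_def)

lemma traj_inv: "map sY1 (traj g1 g2 f1 f2 enc1 enc2 w1 w2 n) = map (\<lambda>s. f1 (sX1 s) (sV2 s)) (traj g1 g2 f1 f2 enc1 enc2 w1 w2 n)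
  \<and> map sY2 (traj g1 g2 f1 f2 enc1 enc2 w1 w2 n) = map (\<lambda>s. f2 (sX2 s) (sV1 s)) (traj g1 g2 f1 f2 enc1 enc2 w1 w2 n)
  \<and> map sV1 (traj g1 g2 f1 f2 enc1 enc2 w1 w2 n) = map (\<lambda>s. g1 (sX1 s)) (traj g1 g2 f1 f2 enc1 enc2 w1 w2 n)
  \<and> map sV2 (traj g1 g2 f1 f2 enc1 enc2 w1 w2 n) = map (\<lambda>s. g2 (sX2 s)) (traj g1 g2 f1 f2 enc1 enc2 w1 w2 n)"
  by (induction n) (auto simp: Let_def)

lemma zip_map_eq: "take (length t) b = map q t \<Longrightarrow> map (case_prod f) (zip (map p t) b) = map (\<lambda>s. f (p s) (q s)) t"
proof (induction t arbitrary: b)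
  case Nil then show ?case by simp
next
  case (Cons s t) then show ?case by (cases b) auto
qed

lemma D1: "take n b = map sV2 (traj g1 g2 f1 f2 enc1 enc2 w1 w2 n) \<Longrightarrow>
   sim1 f1 enc1 w1 b n = map sX1 (traj g1 g2 f1 f2 enc1 enc2 w1 w2 n)"
proof (induction n)
  case 0 then show ?case by simp
next
  case (Suc n)
  let ?t = "traj g1 g2 f1 f2 enc1 enc2 w1 w2 n"
  have ln: "length ?t = n" by (rule traj_len)
  have h: "take n b = map sV2 ?t"
    using arg_cong[OF Suc.prems, of "take n"] ln by (simp add: Let_def min_def)
  have ih: "sim1 f1 enc1 w1 b n = map sX1 ?t" using Suc.IH h by blast
  have y: "map (case_prod f1) (zip (map sX1 ?t) b) = map sY1 ?t"
    using zip_map_eq[of ?t b sV2 f1 sX1] h ln traj_inv[of g1 g2 f1 f2 enc1 enc2 w1 w2 n] by simp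
  show ?case using ih y by (simp add: Let_def)
qed

lemma ci_rect:
  fixes S1 :: "'a set" and S2 :: "'b set"
  assumes f1: "finite S1" and f2: "finite S2" and n1: "S1 \<noteq> {}" and n2: "S2 \<noteq> {}"
    and rect: "\<And>x y. x \<in> S1 \<Longrightarrow> y \<in> S2 \<Longrightarrow> U (x, y) = c \<longleftrightarrow> Pa c x \<and> Pb c y"
    and fa: "\<And>x y. x \<in> S1 \<Longrightarrow> y \<in> S2 \<Longrightarrow> U (x, y) = c \<Longrightarrow> A (x, y) = \<alpha> c x \<and> B (x, y) = \<beta> c y"
  shows "measure_pmf.prob (pmf_of_set (S1 \<times> S2)) {\<omega>. A \<omega> = a \<and> B \<omega> = b \<and> U \<omega> = c}
                * measure_pmf.prob (pmf_of_set (S1 \<times> S2)) {\<omega>. U \<omega> = c}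
              = measure_pmf.prob (pmf_of_set (S1 \<times> S2)) {\<omega>. A \<omega> = a \<and> U \<omega> = c}
                * measure_pmf.prob (pmf_of_set (S1 \<times> S2)) {\<omega>. B \<omega> = b \<and> U \<omega> = c}"
proof -
  let ?S = "S1 \<times> S2"
  have fS: "finite ?S" "?S \<noteq> {}" using f1 f2 n1 n2 by auto
  have pr: "measure_pmf.prob (pmf_of_set ?S) E = card (?S \<inter> E) / card ?S" for E
    using measure_pmf_of_set[OF fS(2) fS(1)] by simp
  define A1 where "A1 = {x\<in>S1. Pa c x}"
  define B1 where "B1 = {y\<in>S2. Pb c y}"
  define A2 where "A2 = {x\<in>S1. Pa c x \<and> \<alpha> c x = a}"
  define B2 where "B2 = {y\<in>S2. Pb c y \<and> \<beta> c y = b}"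
  have e1: "?S \<inter> {\<omega>. A \<omega> = a \<and> B \<omega> = b \<and> U \<omega> = c} = A2 \<times> B2"
    unfolding A2_def B2_def using rect fa by fastforce
  have e2: "?S \<inter> {\<omega>. U \<omega> = c} = A1 \<times> B1"
    unfolding A1_def B1_def using rect by fastforce
  have e3: "?S \<inter> {\<omega>. A \<omega> = a \<and> U \<omega> = c} = A2 \<times> B1"
    unfolding A2_def B1_def using rect fa by fastforce
  have e4: "?S \<inter> {\<omega>. B \<omega> = b \<and> U \<omega> = c} = A1 \<times> B2"
    unfolding A1_def B2_def using rect fa by fastforce
  show ?thesis unfolding pr e1 e2 e3 e4 card_cartesian_product
    by (simp add: field_simps)
qed


lemma D2: "take n a = map sV1 (traj g1 g2 f1 f2 enc1 enc2 w1 w2 n) \<Longrightarrow>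
   sim1 f2 enc2 w2 a n = map sX2 (traj g1 g2 f1 f2 enc1 enc2 w1 w2 n)"
proof (induction n)
  case 0 then show ?case by simp
next
  case (Suc n)
  let ?t = "traj g1 g2 f1 f2 enc1 enc2 w1 w2 n"
  have ln: "length ?t = n" by (rule traj_len)
  have h: "take n a = map sV1 ?t"
    using arg_cong[OF Suc.prems, of "take n"] ln by (simp add: Let_def min_def)
  have ih: "sim1 f2 enc2 w2 a n = map sX2 ?t" using Suc.IH h by blast
  have y: "map (case_prod f2) (zip (map sX2 ?t) a) = map sY2 ?t"
    using zip_map_eq[of ?t a sV1 f2 sX2] h ln traj_inv[of g1 g2 f1 f2 enc1 enc2 w1 w2 n] by simp
  show ?case using ih y by (simp add: Let_def)
qed

lemma R: assumes a: "map g1 (sim1 f1 enc1 w1 b m) = a" and b: "map g2 (sim1 f2 enc2 w2 a m) = b"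
  shows "n \<le> m \<Longrightarrow> map sV1 (traj g1 g2 f1 f2 enc1 enc2 w1 w2 n) = take n a \<and>
         map sV2 (traj g1 g2 f1 f2 enc1 enc2 w1 w2 n) = take n b"
proof (induction n)
  case 0 then show ?case by simp
next
  case (Suc n)
  let ?t = "traj g1 g2 f1 f2 enc1 enc2 w1 w2 n"
  have ln: "length ?t = n" by (rule traj_len)
  have IH: "map sV1 ?t = take n a" "map sV2 ?t = take n b" using Suc by auto
  have s1: "sim1 f1 enc1 w1 b n = map sX1 ?t" using D1 IH(2) by metis
  have s2: "sim1 f2 enc2 w2 a n = map sX2 ?t" using D2 IH(1) by metis
  have y1: "map (case_prod f1) (zip (map sX1 ?t) b) = map sY1 ?t"
    using zip_map_eq[of ?t b sV2 f1 sX1] IH ln traj_inv[of g1 g2 f1 f2 enc1 enc2 w1 w2 n] by simp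
  have y2: "map (case_prod f2) (zip (map sX2 ?t) a) = map sY2 ?t"
    using zip_map_eq[of ?t a sV1 f2 sX2] IH ln traj_inv[of g1 g2 f1 f2 enc1 enc2 w1 w2 n] by simp
  have ta: "take (Suc n) a = map g1 (sim1 f1 enc1 w1 b (Suc n))"
    using a sim1_take[of "Suc n" m f1 enc1 w1 b] Suc.prems by (metis take_map)
  have tb: "take (Suc n) b = map g2 (sim1 f2 enc2 w2 a (Suc n))"
    using b sim1_take[of "Suc n" m f2 enc2 w2 a] Suc.prems by (metis take_map)
  have v: "map sV1 ?t = map (\<lambda>s. g1 (sX1 s)) ?t" "map sV2 ?t = map (\<lambda>s. g2 (sX2 s)) ?t"
    using traj_inv[of g1 g2 f1 f2 enc1 enc2 w1 w2 n] by blast+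
  show ?case unfolding ta tb using s1 s2 y1 y2 v
    by (simp add: Let_def)
qed

theorem claim3:
  fixes g1 :: "'x1::finite \<Rightarrow> 'v1::finite" and g2 :: "'x2::finite \<Rightarrow> 'v2::finite"
    and f1 :: "'x1 \<Rightarrow> 'v2 \<Rightarrow> 'y1::finite" and f2 :: "'x2 \<Rightarrow> 'v1 \<Rightarrow> 'y2::finite"
    and enc1 :: "nat \<Rightarrow> 'w1 \<Rightarrow> 'y1 list \<Rightarrow> 'x1"
    and enc2 :: "nat \<Rightarrow> 'w2 \<Rightarrow> 'y2 list \<Rightarrow> 'x2"
    and W1 :: "'w1 set" and W2 :: "'w2 set" and i :: nat
  assumes EGC2: "\<exists>h2. \<forall>x1 x2. h2 (f1 x1 (g2 x2)) x1 = g2 x2"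
    and EGC1: "\<exists>h1. \<forall>x1 x2. h1 (f2 x2 (g1 x1)) x2 = g1 x1"
    and fin1: "finite W1" and ne1: "W1 \<noteq> {}"
    and fin2: "finite W2" and ne2: "W2 \<noteq> {}"
    and i: "i \<ge> 1"
  shows "(let M = pmf_of_set (W1 \<times> W2);
              T = (\<lambda>(w1, w2) n. traj g1 g2 f1 f2 enc1 enc2 w1 w2 n);
              U = (\<lambda>\<omega>. (map sV1 (T \<omega> (i - 1)), map sV2 (T \<omega> (i - 1))));
              X1 = (\<lambda>\<omega>. sX1 (T \<omega> i ! (i - 1)));
              X2 = (\<lambda>\<omega>. sX2 (T \<omega> i ! (i - 1)))
          in cond_indep M fst snd U \<and> cond_indep M X1 X2 U)"
proof -
  define m where "m = i - 1"
  have im: "i = Suc m" using i m_def by simp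
  let ?t = "\<lambda>w1 w2. traj g1 g2 f1 f2 enc1 enc2 w1 w2 m"
  define U where "U = (\<lambda>\<omega>::'w1\<times>'w2. (map sV1 (?t (fst \<omega>) (snd \<omega>)), map sV2 (?t (fst \<omega>) (snd \<omega>))))"
  define P1 where "P1 = (\<lambda>(c::'v1 list \<times> 'v2 list) w1. map g1 (sim1 f1 enc1 w1 (snd c) m) = fst c)"
  define P2 where "P2 = (\<lambda>(c::'v1 list \<times> 'v2 list) w2. map g2 (sim1 f2 enc2 w2 (fst c) m) = snd c)"
  have rect: "U (x, y) = c \<longleftrightarrow> P1 c x \<and> P2 c y" for x y c
  proof
    assume u: "U (x, y) = c"
    have l: "length (?t x y) = m" by (rule traj_len)
    have "sim1 f1 enc1 x (snd c) m = map sX1 (?t x y)"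
      using D1[of m "snd c" g1 g2 f1 f2 enc1 enc2 x y] u l unfolding U_def by auto
    moreover have "sim1 f2 enc2 y (fst c) m = map sX2 (?t x y)"
      using D2[of m "fst c" g1 g2 f1 f2 enc1 enc2 x y] u l unfolding U_def by auto
    ultimately show "P1 c x \<and> P2 c y" using u traj_inv[of g1 g2 f1 f2 enc1 enc2 x y m]
      unfolding P1_def P2_def U_def by auto
  next
    assume "P1 c x \<and> P2 c y"
    then have "map sV1 (?t x y) = take m (fst c) \<and> map sV2 (?t x y) = take m (snd c)"
      using R[of g1 f1 enc1 x "snd c" m "fst c" g2 f2 enc2 y m] unfolding P1_def P2_def by auto
    moreover have "length (fst c) = m" "length (snd c) = m"
      using \<open>P1 c x \<and> P2 c y\<close> sim1_len unfolding P1_def P2_def by (metis length_map)+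
    ultimately show "U (x, y) = c" unfolding U_def by (simp add: prod_eq_iff)
  qed
  have last: "traj g1 g2 f1 f2 enc1 enc2 x y i ! (i - 1) =
     (let x1 = enc1 (Suc m) x (map sY1 (?t x y)); x2 = enc2 (Suc m) y (map sY2 (?t x y)) in
      \<lparr>sX1 = x1, sX2 = x2, sV1 = g1 x1, sV2 = g2 x2, sY1 = f1 x1 (g2 x2), sY2 = f2 x2 (g1 x1)\<rparr>)" for x y
    using traj_len[of g1 g2 f1 f2 enc1 enc2 x y m] by (simp add: im Let_def nth_append)
  define \<alpha> where "\<alpha> = (\<lambda>(c::'v1 list \<times> 'v2 list) w1. enc1 (Suc m) w1 (map (case_prod f1) (zip (sim1 f1 enc1 w1 (snd c) m) (snd c))))"
  define \<beta> where "\<beta> = (\<lambda>(c::'v1 list \<times> 'v2 list) w2. enc2 (Suc m) w2 (map (case_prod f2) (zip (sim1 f2 enc2 w2 (fst c) m) (fst c))))"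
  have fx: "U (x, y) = c \<Longrightarrow> sX1 (traj g1 g2 f1 f2 enc1 enc2 x y i ! (i - 1)) = \<alpha> c x \<and>
                             sX2 (traj g1 g2 f1 f2 enc1 enc2 x y i ! (i - 1)) = \<beta> c y" for x y c
  proof -
    assume u: "U (x, y) = c"
    have l: "length (?t x y) = m" by (rule traj_len)
    have s1: "sim1 f1 enc1 x (snd c) m = map sX1 (?t x y)"
      using D1[of m "snd c" g1 g2 f1 f2 enc1 enc2 x y] u l unfolding U_def by auto
    have s2: "sim1 f2 enc2 y (fst c) m = map sX2 (?t x y)"
      using D2[of m "fst c" g1 g2 f1 f2 enc1 enc2 x y] u l unfolding U_def by auto
    have y1: "map (case_prod f1) (zip (map sX1 (?t x y)) (snd c)) = map sY1 (?t x y)"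
      using zip_map_eq[of "?t x y" "snd c" sV2 f1 sX1] u l traj_inv[of g1 g2 f1 f2 enc1 enc2 x y m]
      unfolding U_def by auto
    have y2: "map (case_prod f2) (zip (map sX2 (?t x y)) (fst c)) = map sY2 (?t x y)"
      using zip_map_eq[of "?t x y" "fst c" sV1 f2 sX2] u l traj_inv[of g1 g2 f1 f2 enc1 enc2 x y m]
      unfolding U_def by auto
    show ?thesis unfolding last \<alpha>_def \<beta>_def s1 s2 y1 y2 by (simp add: Let_def)
  qed
  have U': "(\<lambda>\<omega>. (map sV1 ((case \<omega> of (w1, w2) \<Rightarrow> traj g1 g2 f1 f2 enc1 enc2 w1 w2) (i - 1)),
                 map sV2 ((case \<omega> of (w1, w2) \<Rightarrow> traj g1 g2 f1 f2 enc1 enc2 w1 w2) (i - 1)))) = U"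
    unfolding U_def m_def by (auto simp: case_prod_beta)
  show ?thesis unfolding Let_def cond_indep_def
    apply (intro conjI allI)
     apply (rule ci_rect[where Pa=P1 and Pb=P2 and \<alpha>="\<lambda>c x. x" and \<beta>="\<lambda>c y. y"])
          apply (use fin1 fin2 ne1 ne2 rect[unfolded U_def m_def] in auto)[6]
    apply (rule ci_rect[where Pa=P1 and Pb=P2 and \<alpha>=\<alpha> and \<beta>=\<beta>])
         apply (use fin1 fin2 ne1 ne2 rect[unfolded U_def m_def] fx[unfolded U_def m_def] in auto)
    done
qed

end
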